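(* Let $\mathbf A$ be a balanced residuated semigroup satisfying (H1), (H2), (H3) (for all $x,y$: if $1_x=1_y$ then $1_{xy}=1_x$, $1_{x/y}=1_x$ and $1_{x\backslash y}=1_x$, where $1_x:=x/x$). For each positive idempotent $p$ of $\mathbf A$ let $A_p:=\{a\in A: a\backslash a=p\}$. Then $\{A_p: p \text{ a positive idempotent}\}$ is a partition of $A$; each $A_p$ is closed under $\cdot,\backslash,/$, so that $\mathbf A_p=\langle A_p,\le,\cdot,\backslash,/,p\rangle$ (restricted order and operations) is a residuated monoid with global identity $p$; and each $\mathbf A_p$ is integrally closed, i.e. $a\backslash a=p=a/a$ for all $a\in A_p$.
   Context: A residuated semigroup is a structure $\langle A,\le,\cdot,\backslash,/\rangle$ where $\langle A,\le\rangle$ is a poset, $\langle A,\cdot\rangle$ is a semigroup (we write $xy$ for $x\cdot y$), and for all $x,y,z$: $xy\le z\iff x\le z/y\iff y\le x\backslash z$. An element $p$ is positive if $a\le pa$ and $a\le ap$ for all $a$; idempotent if $pp=p$. A residuated semigroup is balanced if it satisfies $x\backslash x=x/x$ and every element of the form $a\backslash a$ or $a/a$ is positive. A residuated monoid is a residuated semigroup with a global identity $1$ ($1a=a=a1$ for all $a$); it is integrally closed if $x\backslash x=1$ for all $x$. *)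

theory Defs
  imports Main "HOL-Library.Disjoint_Sets"
begin

text \<open>Structures are given by a carrier set S, an order relation le, multiplication m,
  left division ldiv (x\<setminus>y, written ldiv x y) and right division rdiv (x/y, written rdiv x y).\<close>

definition residuated_semigroup ::
  "'a set \<Rightarrow> ('a \<Rightarrow> 'a \<Rightarrow> bool) \<Rightarrow> ('a \<Rightarrow> 'a \<Rightarrow> 'a) \<Rightarrow> ('a \<Rightarrow> 'a \<Rightarrow> 'a) \<Rightarrow> ('a \<Rightarrow> 'a \<Rightarrow> 'a) \<Rightarrow> bool"
  where "residuated_semigroup S le m ldiv rdiv \<longleftrightarrow>
    (\<forall>x\<in>S. le x x) \<and>
    (\<forall>x\<in>S. \<forall>y\<in>S. le x y \<and> le y x \<longrightarrow> x = y) \<and>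
    (\<forall>x\<in>S. \<forall>y\<in>S. \<forall>z\<in>S. le x y \<and> le y z \<longrightarrow> le x z) \<and>
    (\<forall>x\<in>S. \<forall>y\<in>S. m x y \<in> S \<and> ldiv x y \<in> S \<and> rdiv x y \<in> S) \<and>
    (\<forall>x\<in>S. \<forall>y\<in>S. \<forall>z\<in>S. m (m x y) z = m x (m y z)) \<and>
    (\<forall>x\<in>S. \<forall>y\<in>S. \<forall>z\<in>S. (le (m x y) z \<longleftrightarrow> le x (rdiv z y)) \<and> (le (m x y) z \<longleftrightarrow> le y (ldiv x z)))"

definition positive_el ::
  "'a set \<Rightarrow> ('a \<Rightarrow> 'a \<Rightarrow> bool) \<Rightarrow> ('a \<Rightarrow> 'a \<Rightarrow> 'a) \<Rightarrow> 'a \<Rightarrow> bool"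
  where "positive_el S le m p \<longleftrightarrow> p \<in> S \<and> (\<forall>a\<in>S. le a (m p a) \<and> le a (m a p))"

definition idempotent_el :: "('a \<Rightarrow> 'a \<Rightarrow> 'a) \<Rightarrow> 'a \<Rightarrow> bool"
  where "idempotent_el m p \<longleftrightarrow> m p p = p"

definition balanced ::
  "'a set \<Rightarrow> ('a \<Rightarrow> 'a \<Rightarrow> bool) \<Rightarrow> ('a \<Rightarrow> 'a \<Rightarrow> 'a) \<Rightarrow> ('a \<Rightarrow> 'a \<Rightarrow> 'a) \<Rightarrow> ('a \<Rightarrow> 'a \<Rightarrow> 'a) \<Rightarrow> bool"
  where "balanced S le m ldiv rdiv \<longleftrightarrow>
    (\<forall>x\<in>S. ldiv x x = rdiv x x) \<and>
    (\<forall>a\<in>S. positive_el S le m (ldiv a a) \<and> positive_el S le m (rdiv a a))"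

definition H123 ::
  "'a set \<Rightarrow> ('a \<Rightarrow> 'a \<Rightarrow> 'a) \<Rightarrow> ('a \<Rightarrow> 'a \<Rightarrow> 'a) \<Rightarrow> ('a \<Rightarrow> 'a \<Rightarrow> 'a) \<Rightarrow> bool"
  where "H123 S m ldiv rdiv \<longleftrightarrow>
    (\<forall>x\<in>S. \<forall>y\<in>S. rdiv x x = rdiv y y \<longrightarrow>
       rdiv (m x y) (m x y) = rdiv x x \<and>
       rdiv (rdiv x y) (rdiv x y) = rdiv x x \<and>
       rdiv (ldiv x y) (ldiv x y) = rdiv x x)"

definition residuated_monoid ::
  "'a set \<Rightarrow> ('a \<Rightarrow> 'a \<Rightarrow> bool) \<Rightarrow> ('a \<Rightarrow> 'a \<Rightarrow> 'a) \<Rightarrow> ('a \<Rightarrow> 'a \<Rightarrow> 'a) \<Rightarrow> ('a \<Rightarrow> 'a \<Rightarrow> 'a) \<Rightarrow> 'a \<Rightarrow> bool"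
  where "residuated_monoid S le m ldiv rdiv e \<longleftrightarrow>
    residuated_semigroup S le m ldiv rdiv \<and> e \<in> S \<and> (\<forall>a\<in>S. m e a = a \<and> m a e = a)"

definition integrally_closed ::
  "'a set \<Rightarrow> ('a \<Rightarrow> 'a \<Rightarrow> 'a) \<Rightarrow> 'a \<Rightarrow> bool"
  where "integrally_closed S ldiv e \<longleftrightarrow> (\<forall>x\<in>S. ldiv x x = e)"

definition block :: "'a set \<Rightarrow> ('a \<Rightarrow> 'a \<Rightarrow> 'a) \<Rightarrow> 'a \<Rightarrow> 'a set"
  where "block S ldiv p = {a \<in> S. ldiv a a = p}"

end

theory Submission
  imports Defs
begin

theorem proposition3p5:
  fixes A :: "'a set" and le :: "'a \<Rightarrow> 'a \<Rightarrow> bool"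
    and m ldiv rdiv :: "'a \<Rightarrow> 'a \<Rightarrow> 'a"
  assumes "residuated_semigroup A le m ldiv rdiv"
    and "balanced A le m ldiv rdiv"
    and "H123 A m ldiv rdiv"
  shows "partition_on A {block A ldiv p | p. positive_el A le m p \<and> idempotent_el m p}
    \<and> (\<forall>p. positive_el A le m p \<and> idempotent_el m p \<longrightarrow>
          (\<forall>a\<in>block A ldiv p. \<forall>b\<in>block A ldiv p.
              m a b \<in> block A ldiv p \<and> ldiv a b \<in> block A ldiv p \<and> rdiv a b \<in> block A ldiv p)
        \<and> residuated_monoid (block A ldiv p) le m ldiv rdiv p
        \<and> integrally_closed (block A ldiv p) ldiv p
        \<and> (\<forall>a\<in>block A ldiv p. rdiv a a = p))"
proof -
  note RS = assms(1)[unfolded residuated_semigroup_def]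
  note BL = assms(2)[unfolded balanced_def]
  note H = assms(3)[unfolded H123_def]
  have R1: "\<forall>x\<in>A. le x x" using RS by (rule conjunct1)
  have R2: "\<forall>x\<in>A. \<forall>y\<in>A. le x y \<and> le y x \<longrightarrow> x = y" using RS[THEN conjunct2] by (rule conjunct1)
  have R3: "\<forall>x\<in>A. \<forall>y\<in>A. \<forall>z\<in>A. le x y \<and> le y z \<longrightarrow> le x z" using RS[THEN conjunct2, THEN conjunct2] by (rule conjunct1)
  have R4: "\<forall>x\<in>A. \<forall>y\<in>A. m x y \<in> A \<and> ldiv x y \<in> A \<and> rdiv x y \<in> A" using RS[THEN conjunct2, THEN conjunct2, THEN conjunct2] by (rule conjunct1)
  have R5: "\<forall>x\<in>A. \<forall>y\<in>A. \<forall>z\<in>A. m (m x y) z = m x (m y z)" using RS[THEN conjunct2, THEN conjunct2, THEN conjunct2, THEN conjunct2] by (rule conjunct1)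
  have R6: "\<forall>x\<in>A. \<forall>y\<in>A. \<forall>z\<in>A. (le (m x y) z \<longleftrightarrow> le x (rdiv z y)) \<and> (le (m x y) z \<longleftrightarrow> le y (ldiv x z))" using RS[THEN conjunct2, THEN conjunct2, THEN conjunct2, THEN conjunct2] by (rule conjunct2)
  have refl: "\<And>x. x\<in>A \<Longrightarrow> le x x" using R1 by simp
  have anti: "\<And>x y. x\<in>A \<Longrightarrow> y\<in>A \<Longrightarrow> le x y \<Longrightarrow> le y x \<Longrightarrow> x = y" using R2 by simp
  have trans: "\<And>x y z. x\<in>A \<Longrightarrow> y\<in>A \<Longrightarrow> z\<in>A \<Longrightarrow> le x y \<Longrightarrow> le y z \<Longrightarrow> le x z" using R3 by meson
  have cl: "\<And>x y. x\<in>A \<Longrightarrow> y\<in>A \<Longrightarrow> m x y \<in> A \<and> ldiv x y \<in> A \<and> rdiv x y \<in> A" using R4 by simp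
  have assoc: "\<And>x y z. x\<in>A \<Longrightarrow> y\<in>A \<Longrightarrow> z\<in>A \<Longrightarrow> m (m x y) z = m x (m y z)" using R5 by simp
  have resr: "\<And>x y z. x\<in>A \<Longrightarrow> y\<in>A \<Longrightarrow> z\<in>A \<Longrightarrow> le (m x y) z \<longleftrightarrow> le x (rdiv z y)" using R6 by simp
  have resl: "\<And>x y z. x\<in>A \<Longrightarrow> y\<in>A \<Longrightarrow> z\<in>A \<Longrightarrow> le (m x y) z \<longleftrightarrow> le y (ldiv x z)" using R6 by blast
  have bal: "\<And>x. x\<in>A \<Longrightarrow> ldiv x x = rdiv x x" using BL by simp
  have posl: "\<And>a. a\<in>A \<Longrightarrow> positive_el A le m (ldiv a a)" using BL by simp
  have monr: "\<And>x y z. x\<in>A \<Longrightarrow> y\<in>A \<Longrightarrow> z\<in>A \<Longrightarrow> le x y \<Longrightarrow> le (m x z) (m y z)"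
  proof -
    fix x y z assume h: "x\<in>A" "y\<in>A" "z\<in>A" "le x y"
    have myz: "m y z \<in> A" using cl h by blast
    then have "le y (rdiv (m y z) z)" using resr[of y z "m y z"] h refl[of "m y z"] by blast
    moreover have "rdiv (m y z) z \<in> A" using cl h by blast
    ultimately have "le x (rdiv (m y z) z)" using trans[of x y "rdiv (m y z) z"] h by blast
    then show "le (m x z) (m y z)" using resr[of x z "m y z"] h myz by blast
  qed
  have aua: "\<And>a. a\<in>A \<Longrightarrow> le (m a (ldiv a a)) a"
  proof -
    fix a assume a: "a\<in>A"
    have u: "ldiv a a \<in> A" using cl a by blast
    show "le (m a (ldiv a a)) a" by (rule iffD2[OF resl[OF a u a] refl[OF u]])
  qed
  have uaa: "\<And>a. a\<in>A \<Longrightarrow> le (m (rdiv a a) a) a"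
  proof -
    fix a assume a: "a\<in>A"
    have u: "rdiv a a \<in> A" using cl a by blast
    show "le (m (rdiv a a) a) a" by (rule iffD2[OF resr[OF u a a] refl[OF u]])
  qed
  have idem: "\<And>a. a\<in>A \<Longrightarrow> idempotent_el m (ldiv a a)"
  proof -
    fix a assume a: "a\<in>A"
    define u where "u = ldiv a a"
    have u: "u\<in>A" using cl a u_def by blast
    have pu: "positive_el A le m u" using posl[OF a] u_def by simp
    have uu1: "le u (m u u)" using pu u unfolding positive_el_def by blast
    have au: "m a u \<in> A" using cl a u by blast
    have auu: "m (m a u) u \<in> A" using cl au u by blast
    have uu: "m u u \<in> A" using cl u by blast
    have aua': "le (m a u) a" using aua[OF a] u_def by simp
    have s1: "le (m (m a u) u) (m a u)" by (rule monr[OF au a u aua'])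
    have s2: "le (m (m a u) u) a" by (rule trans[OF auu au a s1 aua'])
    have s3: "le (m a (m u u)) a" using s2 assoc[OF a u u] by simp
    have s4: "le (m u u) u" using iffD1[OF resl[OF a uu a] s3] u_def by simp
    show "idempotent_el m (ldiv a a)" unfolding idempotent_el_def u_def[symmetric]
      by (rule anti[OF uu u s4 uu1])
  qed
  have pp: "\<And>p. positive_el A le m p \<Longrightarrow> idempotent_el m p \<Longrightarrow> ldiv p p = p"
  proof -
    fix p assume h: "positive_el A le m p" "idempotent_el m p"
    have p: "p\<in>A" using h(1) unfolding positive_el_def by blast
    have q: "ldiv p p \<in> A" using cl p by blast
    have pp': "m p p = p" using h(2) unfolding idempotent_el_def .
    have "le (m p p) p" using refl[OF p] pp' by simp
    then have pq: "le p (ldiv p p)" using iffD1[OF resl[OF p p p]] by blast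
    have t1: "le (ldiv p p) (m p (ldiv p p))" using h(1) q unfolding positive_el_def by blast
    have pq2: "m p (ldiv p p) \<in> A" using cl p q by blast
    have "le (ldiv p p) p" by (rule trans[OF q pq2 p t1 aua[OF p]])
    then show "ldiv p p = p" by (rule anti[OF q p _ pq])
  qed
  have part: "partition_on A {block A ldiv p | p. positive_el A le m p \<and> idempotent_el m p}"
    unfolding partition_on_def
  proof (intro conjI)
    show "\<Union> {block A ldiv p | p. positive_el A le m p \<and> idempotent_el m p} = A"
    proof
      show "\<Union> {block A ldiv p | p. positive_el A le m p \<and> idempotent_el m p} \<subseteq> A"
        unfolding block_def by blast
      show "A \<subseteq> \<Union> {block A ldiv p | p. positive_el A le m p \<and> idempotent_el m p}"
      proof
        fix a assume a: "a\<in>A"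
        then have "a \<in> block A ldiv (ldiv a a)" unfolding block_def by simp
        then show "a \<in> \<Union> {block A ldiv p | p. positive_el A le m p \<and> idempotent_el m p}"
          using posl[OF a] idem[OF a] by blast
      qed
    qed
    show "disjoint {block A ldiv p | p. positive_el A le m p \<and> idempotent_el m p}"
    proof (rule disjointI)
      fix X Y assume X: "X \<in> {block A ldiv p | p. positive_el A le m p \<and> idempotent_el m p}"
        and Y: "Y \<in> {block A ldiv p | p. positive_el A le m p \<and> idempotent_el m p}" and ne: "X \<noteq> Y"
      obtain p where Xp: "X = block A ldiv p" using X by blast
      obtain q where Yq: "Y = block A ldiv q" using Y by blast
      have "p \<noteq> q" using ne Xp Yq by blast
      then show "X \<inter> Y = {}" unfolding Xp Yq block_def by blast
    qed
    show "{} \<notin> {block A ldiv p | p. positive_el A le m p \<and> idempotent_el m p}"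
    proof
      assume "{} \<in> {block A ldiv p | p. positive_el A le m p \<and> idempotent_el m p}"
      then obtain p where "positive_el A le m p" "idempotent_el m p" "block A ldiv p = {}" by auto
      moreover have "p \<in> A" using calculation(1) unfolding positive_el_def by blast
      ultimately have "p \<in> block A ldiv p" using pp unfolding block_def by simp
      then show False using \<open>block A ldiv p = {}\<close> by simp
    qed
  qed
  show ?thesis
  proof (intro conjI allI impI)
    show "partition_on A {block A ldiv p | p. positive_el A le m p \<and> idempotent_el m p}" by (rule part)
  next
    fix p assume hp: "positive_el A le m p \<and> idempotent_el m p"
    have p: "p\<in>A" using hp unfolding positive_el_def by blast
    have pB: "p \<in> block A ldiv p" using pp hp p unfolding block_def by blast
    have closed: "\<forall>a\<in>block A ldiv p. \<forall>b\<in>block A ldiv p.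
              m a b \<in> block A ldiv p \<and> ldiv a b \<in> block A ldiv p \<and> rdiv a b \<in> block A ldiv p"
    proof (intro ballI)
      fix a b assume a: "a \<in> block A ldiv p" and b: "b \<in> block A ldiv p"
      have aA: "a\<in>A" and bA: "b\<in>A" and ap: "ldiv a a = p" and bp: "ldiv b b = p"
        using a b unfolding block_def by auto
      have e: "rdiv a a = rdiv b b" using bal[OF aA] bal[OF bA] ap bp by simp
      have "rdiv (m a b) (m a b) = rdiv a a \<and> rdiv (rdiv a b) (rdiv a b) = rdiv a a \<and> rdiv (ldiv a b) (ldiv a b) = rdiv a a"
        using H aA bA e by blast
      moreover have "rdiv a a = p" using bal[OF aA] ap by simp
      moreover have "m a b \<in> A" "ldiv a b \<in> A" "rdiv a b \<in> A" using cl aA bA by auto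
      ultimately show "m a b \<in> block A ldiv p \<and> ldiv a b \<in> block A ldiv p \<and> rdiv a b \<in> block A ldiv p"
        unfolding block_def using bal by simp
    qed
    show "\<forall>a\<in>block A ldiv p. \<forall>b\<in>block A ldiv p.
              m a b \<in> block A ldiv p \<and> ldiv a b \<in> block A ldiv p \<and> rdiv a b \<in> block A ldiv p"
      by (rule closed)
    have sub: "block A ldiv p \<subseteq> A" unfolding block_def by blast
    show "residuated_monoid (block A ldiv p) le m ldiv rdiv p"
      unfolding residuated_monoid_def
    proof (intro conjI)
      show "residuated_semigroup (block A ldiv p) le m ldiv rdiv"
      proof -
        let ?B = "block A ldiv p"
        have F1: "\<forall>x\<in>?B. le x x" using sub refl by blast
        have F2: "\<forall>x\<in>?B. \<forall>y\<in>?B. le x y \<and> le y x \<longrightarrow> x = y" using sub anti by blast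
        have F3: "\<forall>x\<in>?B. \<forall>y\<in>?B. \<forall>z\<in>?B. le x y \<and> le y z \<longrightarrow> le x z"
        proof (intro ballI impI)
          fix x y z assume "x\<in>?B" "y\<in>?B" "z\<in>?B" "le x y \<and> le y z"
          then show "le x z" using sub trans[of x y z] by blast
        qed
        have F4: "\<forall>x\<in>?B. \<forall>y\<in>?B. m x y \<in> ?B \<and> ldiv x y \<in> ?B \<and> rdiv x y \<in> ?B" by (rule closed)
        have F5: "\<forall>x\<in>?B. \<forall>y\<in>?B. \<forall>z\<in>?B. m (m x y) z = m x (m y z)"
        proof (intro ballI)
          fix x y z assume "x\<in>?B" "y\<in>?B" "z\<in>?B"
          then show "m (m x y) z = m x (m y z)" using sub assoc[of x y z] by blast
        qed
        have F6: "\<forall>x\<in>?B. \<forall>y\<in>?B. \<forall>z\<in>?B. (le (m x y) z \<longleftrightarrow> le x (rdiv z y)) \<and> (le (m x y) z \<longleftrightarrow> le y (ldiv x z))"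
        proof (intro ballI)
          fix x y z assume "x\<in>?B" "y\<in>?B" "z\<in>?B"
          then have xyz: "x\<in>A" "y\<in>A" "z\<in>A" using sub by blast+
          show "(le (m x y) z \<longleftrightarrow> le x (rdiv z y)) \<and> (le (m x y) z \<longleftrightarrow> le y (ldiv x z))"
            using resr[OF xyz] resl[OF xyz] by (rule conjI)
        qed
        show ?thesis unfolding residuated_semigroup_def by (intro conjI) (fact F1, fact F2, fact F3, fact F4, fact F5, fact F6)
      qed
      show "p \<in> block A ldiv p" by (rule pB)
      show "\<forall>a\<in>block A ldiv p. m p a = a \<and> m a p = a"
      proof
        fix a assume a: "a \<in> block A ldiv p"
        have aA: "a\<in>A" and ap: "ldiv a a = p" using a unfolding block_def by auto
        have rp: "rdiv a a = p" using bal[OF aA] ap by simp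
        have l1: "le a (m p a)" "le a (m a p)" using hp aA unfolding positive_el_def by auto
        have l2: "le (m p a) a" using uaa[OF aA] rp by simp
        have l3: "le (m a p) a" using aua[OF aA] ap by simp
        have "m p a \<in> A" "m a p \<in> A" using cl aA p by auto
        then show "m p a = a \<and> m a p = a" using anti[of "m p a" a] anti[of "m a p" a] l1 l2 l3 aA by blast
      qed
    qed
    show "integrally_closed (block A ldiv p) ldiv p"
      unfolding integrally_closed_def block_def by simp
    show "\<forall>a\<in>block A ldiv p. rdiv a a = p"
      unfolding block_def using bal by auto
  qed
qed

end
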